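(* Let $X,Y$ be $c$-free with respect to $(\varphi,\psi)$ on $\mathbb{C}\langle X,Y\rangle$, let $A,B\in M_N(\mathbb{C})$, $\mathbf{\Psi}=(I-z(AX+BY))^{-1}$, and $F^\varphi_X=\beta^{\delta,\varphi}_X(X\mathbf{\Psi})$, $F^\varphi_Y=\beta^{\delta,\varphi}_Y(Y\mathbf{\Psi})$. Then $$M^\varphi_{AX+BY}(z):=\varphi(\mathbf{\Psi})=(I-zAF^\varphi_X-zBF^\varphi_Y)^{-1}.$$ Consequently, if $P\in\mathbb{C}\langle X,Y\rangle$ has degree $m$ and $u,v\in\mathbb{C}^N$ are such that $(1-z^mP)^{-1}=u^t\mathbf{\Psi}v$ as formal power series, then $M^\varphi_{P}(z^m):=\sum_{n\ge0}\varphi(P^n)z^{mn}=u^tM^\varphi_{AX+BY}(z)v$.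
   Context: $X,Y$ are $c$-free w.r.t. $(\varphi,\psi)$ (unital functionals on $\mathbb{C}\langle X,Y\rangle$) if $\psi(u_1\cdots u_n)=0$ and $\varphi(u_1\cdots u_n)=\prod\varphi(u_j)$ whenever the $u_j$ alternate between $\mathbb{C}\langle X\rangle$ and $\mathbb{C}\langle Y\rangle$ and $\psi(u_j)=0$. Boolean cumulants $\beta^\theta_n$ of $\theta$: $\theta(a_1\cdots a_n)=\sum_{k}\beta^\theta_k(a_1,\dots,a_k)\theta(a_{k+1}\cdots a_n)$. $\beta^{\delta,\varphi}_X(1)=1$ and $\beta^{\delta,\varphi}_X(Z_1\cdots Z_k)=\beta^\varphi_k(Z_1,\dots,Z_k)$ ($Z_i\in\{X,Y\}$) if $Z_1=Z_k=X$, else $0$; $\beta^{\delta,\varphi}_Y$ analogously; extended linearly. $\mathbf{\Psi}=\sum_n z^n(AX+BY)^n$; functionals act entrywise on matrices and coefficientwise on formal power series in $z$, and inverses are formal power series inverses. *)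

theory Defs
  imports "HOL-Analysis.Analysis" "HOL-Computational_Algebra.Formal_Power_Series"
begin

datatype L = LX | LY

type_synonym word = "L list"

text \<open>A (noncommutative) polynomial is a finitely supported coefficient function on words.\<close>
type_synonym ncp = "word \<Rightarrow> complex"

definition ncfin :: "ncp \<Rightarrow> bool" where
  "ncfin p \<longleftrightarrow> finite {w. p w \<noteq> 0}"

definition ncone :: ncp where
  "ncone = (\<lambda>w. if w = [] then 1 else 0)"

definition ncvar :: "L \<Rightarrow> ncp" where
  "ncvar l = (\<lambda>w. if w = [l] then 1 else 0)"

definition ncmul :: "ncp \<Rightarrow> ncp \<Rightarrow> ncp" where
  "ncmul p q = (\<lambda>w. \<Sum>k\<in>{0..length w}. p (take k w) * q (drop k w))"

definition ncpow :: "ncp \<Rightarrow> nat \<Rightarrow> ncp" where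
  "ncpow p n = (ncmul p ^^ n) ncone"

definition ncprod :: "ncp list \<Rightarrow> ncp" where
  "ncprod ps = foldr ncmul ps ncone"

definition ncdeg :: "ncp \<Rightarrow> nat" where
  "ncdeg p = Max (insert 0 (length ` {w. p w \<noteq> 0}))"

text \<open>Subalgebra C<X> (b = True) resp. C<Y> (b = False).\<close>
definition ncalg :: "bool \<Rightarrow> ncp set" where
  "ncalg b = {p. \<forall>w. p w \<noteq> 0 \<longrightarrow> set w \<subseteq> {if b then LX else LY}}"

text \<open>A linear functional on C<X,Y> is determined by its values on words;
  \<open>lin \<theta> p\<close> is its linear extension.\<close>
definition lin :: "(word \<Rightarrow> complex) \<Rightarrow> ncp \<Rightarrow> complex" where
  "lin \<theta> p = (\<Sum>w\<in>{w. p w \<noteq> 0}. p w * \<theta> w)"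

definition cfree :: "(word \<Rightarrow> complex) \<Rightarrow> (word \<Rightarrow> complex) \<Rightarrow> bool" where
  "cfree \<phi> \<psi> \<longleftrightarrow>
    (\<forall>us :: (bool \<times> ncp) list.
       us \<noteq> [] \<longrightarrow>
       (\<forall>(b, u)\<in>set us. ncfin u \<and> u \<in> ncalg b \<and> lin \<psi> u = 0) \<longrightarrow>
       successively (\<noteq>) (map fst us) \<longrightarrow>
       lin \<psi> (ncprod (map snd us)) = 0 \<and>
       lin \<phi> (ncprod (map snd us)) = (\<Prod>u\<leftarrow>map snd us. lin \<phi> u))"

text \<open>\<open>bcum \<theta> [Z1,...,Zk] = \<beta>^\<theta>_k(Z1,...,Zk)\<close>, determined by the recursion
  \<open>\<theta>(Z1...Zn) = \<Sum>_{k=1}^n \<beta>_k(Z1..Zk) \<theta>(Z_{k+1}...Zn)\<close> (with \<open>\<theta>(1) = 1\<close>).\<close>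
function bcum :: "(word \<Rightarrow> complex) \<Rightarrow> word \<Rightarrow> complex" where
  "bcum \<theta> w = (if w = [] then 0 else
     \<theta> w - (\<Sum>k\<in>{1..<length w}. bcum \<theta> (take k w) * \<theta> (drop k w)))"
  by pat_completeness auto
termination
  by (relation "Wellfounded.measure (\<lambda>(\<theta>, w). length w)") auto

definition bdelta :: "L \<Rightarrow> (word \<Rightarrow> complex) \<Rightarrow> word \<Rightarrow> complex" where
  "bdelta l \<phi> w = (if w = [] then 1
                    else if hd w = l \<and> last w = l then bcum \<phi> w else 0)"

definition linpenc :: "complex^'n^'n \<Rightarrow> complex^'n^'n \<Rightarrow> 'n \<Rightarrow> 'n \<Rightarrow> ncp" where
  "linpenc A B i j = (\<lambda>w. if w = [LX] then A$i$j else if w = [LY] then B$i$j else 0)"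

definition ncmatmul :: "('n::finite \<Rightarrow> 'n \<Rightarrow> ncp) \<Rightarrow> ('n \<Rightarrow> 'n \<Rightarrow> ncp) \<Rightarrow> 'n \<Rightarrow> 'n \<Rightarrow> ncp" where
  "ncmatmul P Q i j = (\<lambda>w. \<Sum>k\<in>UNIV. ncmul (P i k) (Q k j) w)"

definition ncmatone :: "'n \<Rightarrow> 'n \<Rightarrow> ncp" where
  "ncmatone i j = (if i = j then ncone else (\<lambda>w. 0))"

text \<open>\<open>Psi A B n\<close> is the coefficient of \<open>z^n\<close> of \<Psi>, i.e. the matrix \<open>(AX+BY)^n\<close>.\<close>
definition Psi :: "complex^'n^'n \<Rightarrow> complex^'n^'n \<Rightarrow> nat \<Rightarrow> 'n::finite \<Rightarrow> 'n \<Rightarrow> ncp" where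
  "Psi A B n = (ncmatmul (linpenc A B) ^^ n) ncmatone"

text \<open>Moment series \<open>M^\<phi>_{AX+BY}(z) = \<phi>(\<Psi>)\<close> (entrywise, coefficientwise).\<close>
definition Mom :: "(word \<Rightarrow> complex) \<Rightarrow> complex^'n^'n \<Rightarrow> complex^'n^'n \<Rightarrow> complex fps^'n^'n::finite" where
  "Mom \<phi> A B = (\<chi> i j. Abs_fps (\<lambda>n. lin \<phi> (Psi A B n i j)))"

definition Fser :: "L \<Rightarrow> (word \<Rightarrow> complex) \<Rightarrow> complex^'n^'n \<Rightarrow> complex^'n^'n \<Rightarrow> complex fps^'n^'n::finite" where
  "Fser l \<phi> A B = (\<chi> i j. Abs_fps (\<lambda>n. lin (bdelta l \<phi>) (ncmul (ncvar l) (Psi A B n i j))))"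

definition zmat :: "complex^'n^'n \<Rightarrow> complex fps^'n^'n" where
  "zmat A = (\<chi> i j. fps_X * fps_const (A$i$j))"

end

theory Submission
  imports Defs
begin

instance L :: finite
proof
  have "(UNIV :: L set) = {LX, LY}" by (auto intro: L.exhaust)
  then show "finite (UNIV :: L set)" by (metis finite.emptyI finite_insert)
qed

definition splits :: "word \<Rightarrow> (word \<times> word) set" where
  "splits w = {(u,v). u @ v = w}"

definition mon :: "word \<Rightarrow> ncp" where
  "mon u = (\<lambda>w. if w = u then 1 else 0)"

definition supp :: "ncp \<Rightarrow> word set" where
  "supp p = {w. p w \<noteq> 0}"

lemma bij_splits: "bij_betw (\<lambda>k. (take k w, drop k w)) {0..length w} (splits w)"
  unfolding bij_betw_def splits_def
proof
  show "inj_on (\<lambda>k. (take k w, drop k w)) {0..length w}"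
  proof (rule inj_onI)
    fix k k' assume "k \<in> {0..length w}" "k' \<in> {0..length w}"
      "(take k w, drop k w) = (take k' w, drop k' w)"
    then show "k = k'" by (metis atLeastAtMost_iff length_take min.absorb2 prod.inject)
  qed
  show "(\<lambda>k. (take k w, drop k w)) ` {0..length w} = {(u, v). u @ v = w}"
  proof
    show "(\<lambda>k. (take k w, drop k w)) ` {0..length w} \<subseteq> {(u, v). u @ v = w}" by auto
    show "{(u, v). u @ v = w} \<subseteq> (\<lambda>k. (take k w, drop k w)) ` {0..length w}"
    proof
      fix x assume "x \<in> {(u, v). u @ v = w}"
      then obtain u v where x: "x = (u,v)" "u @ v = w" by auto
      then show "x \<in> (\<lambda>k. (take k w, drop k w)) ` {0..length w}"
        by (intro image_eqI[where x="length u"]) auto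
    qed
  qed
qed

lemma finite_splits[simp]: "finite (splits w)"
  using bij_betw_finite bij_splits by blast

lemma ncmul_splits: "ncmul p q w = (\<Sum>(u,v)\<in>splits w. p u * q v)"
  unfolding ncmul_def
  using sum.reindex_bij_betw[OF bij_splits, of "\<lambda>(u,v). p u * q v" w]
  by simp

lemma ncmul_assoc: "ncmul (ncmul p q) r = ncmul p (ncmul q r)"
proof
  fix w
  have "ncmul (ncmul p q) r w = (\<Sum>ac\<in>splits w. \<Sum>xy\<in>splits (fst ac). p (fst xy) * q (snd xy) * r (snd ac))"
    by (simp add: ncmul_splits sum_distrib_right case_prod_beta)
  also have "\<dots> = (\<Sum>(ac,xy)\<in>Sigma (splits w) (\<lambda>ac. splits (fst ac)). p (fst xy) * q (snd xy) * r (snd ac))"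
    by (rule sum.Sigma) auto
  also have "\<dots> = (\<Sum>(x,y,z)\<in>{(x,y,z). x @ y @ z = w}. p x * q y * r z)"
    by (rule sum.reindex_bij_witness[where j="\<lambda>((a,c),(x,y)). (x,y,c)" and i="\<lambda>(x,y,z). ((x@y,z),(x,y))"])
       (auto simp: splits_def)
  also have "\<dots> = (\<Sum>(ac,xy)\<in>Sigma (splits w) (\<lambda>ac. splits (snd ac)). p (fst ac) * q (fst xy) * r (snd xy))"
    by (rule sum.reindex_bij_witness[where j="\<lambda>(x,y,z). ((x,y@z),(y,z))" and i="\<lambda>((a,c),(x,y)). (a,x,y)"])
       (auto simp: splits_def)
  also have "\<dots> = (\<Sum>ac\<in>splits w. \<Sum>xy\<in>splits (snd ac). p (fst ac) * q (fst xy) * r (snd xy))"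
    by (rule sum.Sigma[symmetric]) auto
  also have "\<dots> = ncmul p (ncmul q r) w"
    by (simp add: ncmul_splits sum_distrib_left case_prod_beta mult.assoc)
  finally show "ncmul (ncmul p q) r w = ncmul p (ncmul q r) w" .
qed

lemma ncmul_add_left: "ncmul (\<lambda>w. p w + q w) r = (\<lambda>w. ncmul p r w + ncmul q r w)"
  by (simp add: ncmul_def algebra_simps sum.distrib fun_eq_iff)
lemma ncmul_add_right: "ncmul r (\<lambda>w. p w + q w) = (\<lambda>w. ncmul r p w + ncmul r q w)"
  by (simp add: ncmul_def algebra_simps sum.distrib fun_eq_iff)
lemma ncmul_smult_left: "ncmul (\<lambda>w. c * p w) r = (\<lambda>w. c * ncmul p r w)"
  by (simp add: ncmul_def sum_distrib_left mult.assoc fun_eq_iff)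
lemma ncmul_smult_right: "ncmul r (\<lambda>w. c * p w) = (\<lambda>w. c * ncmul r p w)"
  by (simp add: ncmul_def sum_distrib_left algebra_simps fun_eq_iff)
lemma ncmul_diff_left: "ncmul (\<lambda>w. p w - q w) r = (\<lambda>w. ncmul p r w - ncmul q r w)"
  by (simp add: ncmul_def algebra_simps sum_subtractf fun_eq_iff)
lemma ncmul_sum_left: "ncmul (\<lambda>w. \<Sum>k\<in>K. f k w) r = (\<lambda>w. \<Sum>k\<in>K. ncmul (f k) r w)"
  unfolding ncmul_def by (rule ext) (simp add: sum_distrib_right, rule sum.swap)

lemma ncone_mono: "ncone = mon []" by (simp add: ncone_def mon_def fun_eq_iff)
lemma ncvar_mono: "ncvar c = mon [c]" by (simp add: ncvar_def mon_def fun_eq_iff)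

lemma ncmul_mono_mono: "ncmul (mon u) (mon v) = mon (u @ v)"
proof
  fix w
  have "ncmul (mon u) (mon v) w = (\<Sum>x\<in>splits w. if x = (u,v) then 1 else 0)"
    unfolding ncmul_splits by (rule sum.cong) (auto simp: mon_def split: if_splits)
  also have "\<dots> = mon (u @ v) w" by (subst sum.delta[OF finite_splits]) (auto simp: splits_def mon_def)
  finally show "ncmul (mon u) (mon v) w = mon (u @ v) w" .
qed

lemma ncmul_one_left[simp]: "ncmul ncone p = p"
proof
  fix w
  have "ncmul ncone p w = (\<Sum>x\<in>splits w. if x = ([], w) then p (snd x) else 0)"
    unfolding ncmul_splits by (rule sum.cong) (auto simp: ncone_def splits_def split: if_splits)
  also have "\<dots> = p w" by (subst sum.delta[OF finite_splits]) (auto simp: splits_def)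
  finally show "ncmul ncone p w = p w" .
qed

lemma ncmul_one_right[simp]: "ncmul p ncone = p"
proof
  fix w
  have "ncmul p ncone w = (\<Sum>x\<in>splits w. if x = (w, []) then p (fst x) else 0)"
    unfolding ncmul_splits by (rule sum.cong) (auto simp: ncone_def splits_def split: if_splits)
  also have "\<dots> = p w" by (subst sum.delta[OF finite_splits]) (auto simp: splits_def)
  finally show "ncmul p ncone w = p w" .
qed

lemma ncmul_nonzero:
  assumes "ncmul p q w \<noteq> 0"
  obtains u v where "u @ v = w" "p u \<noteq> 0" "q v \<noteq> 0"
proof -
  from assms have "\<exists>x\<in>splits w. (\<lambda>(u,v). p u * q v) x \<noteq> 0"
    unfolding ncmul_splits by (meson sum.neutral)
  then show ?thesis using that by (auto simp: splits_def)
qed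

lemma ncfin_mul: "ncfin p \<Longrightarrow> ncfin q \<Longrightarrow> ncfin (ncmul p q)"
proof -
  assume "ncfin p" "ncfin q"
  have "{w. ncmul p q w \<noteq> 0} \<subseteq> (\<lambda>(u,v). u @ v) ` ({w. p w \<noteq> 0} \<times> {w. q w \<noteq> 0})"
  proof
    fix w assume "w \<in> {w. ncmul p q w \<noteq> 0}"
    then obtain u v where "u @ v = w" "p u \<noteq> 0" "q v \<noteq> 0" using ncmul_nonzero by blast
    then show "w \<in> (\<lambda>(u,v). u @ v) ` ({w. p w \<noteq> 0} \<times> {w. q w \<noteq> 0})" by auto
  qed
  then show ?thesis using \<open>ncfin p\<close> \<open>ncfin q\<close> unfolding ncfin_def
    by (meson finite_SigmaI finite_imageI finite_subset)
qed

lemma ncalg_mul: "p \<in> ncalg b \<Longrightarrow> q \<in> ncalg b \<Longrightarrow> ncmul p q \<in> ncalg b"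
  unfolding ncalg_def
proof (intro CollectI allI impI)
  fix w assume p: "p \<in> {p. \<forall>w. p w \<noteq> 0 \<longrightarrow> set w \<subseteq> {if b then LX else LY}}"
    and q: "q \<in> {p. \<forall>w. p w \<noteq> 0 \<longrightarrow> set w \<subseteq> {if b then LX else LY}}" and "ncmul p q w \<noteq> 0"
  then obtain u v where uv: "u @ v = w" "p u \<noteq> 0" "q v \<noteq> 0" using ncmul_nonzero by blast
  have "set u \<subseteq> {if b then LX else LY}" using p uv by blast
  moreover have "set v \<subseteq> {if b then LX else LY}" using q uv by blast
  ultimately show "set w \<subseteq> {if b then LX else LY}" using uv by auto
qed

lemma ncfin_mono[simp]: "ncfin (mon u)" by (simp add: ncfin_def mon_def)
lemma ncfin_one[simp]: "ncfin ncone" by (simp add: ncone_mono)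
lemma ncfin_var[simp]: "ncfin (ncvar c)" by (simp add: ncvar_mono)
lemma ncfin_add: "ncfin p \<Longrightarrow> ncfin q \<Longrightarrow> ncfin (\<lambda>w. p w + q w)"
  unfolding ncfin_def by (rule finite_subset[of _ "{w. p w \<noteq> 0} \<union> {w. q w \<noteq> 0}"]) auto
lemma ncfin_diff: "ncfin p \<Longrightarrow> ncfin q \<Longrightarrow> ncfin (\<lambda>w. p w - q w)"
  unfolding ncfin_def by (rule finite_subset[of _ "{w. p w \<noteq> 0} \<union> {w. q w \<noteq> 0}"]) auto
lemma ncfin_smult: "ncfin p \<Longrightarrow> ncfin (\<lambda>w. c * p w)"
  unfolding ncfin_def by (rule finite_subset[of _ "{w. p w \<noteq> 0}"]) auto
lemma ncfin_zero[simp]: "ncfin (\<lambda>w. 0)" by (simp add: ncfin_def)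

lemma ncalg_one[simp]: "ncone \<in> ncalg b" by (simp add: ncalg_def ncone_def)
lemma ncalg_var: "ncvar c \<in> ncalg (c = LX)"
  by (cases c) (auto simp: ncalg_def ncvar_def)
lemma ncalg_add: assumes "p \<in> ncalg b" "q \<in> ncalg b" shows "(\<lambda>w. p w + q w) \<in> ncalg b"
proof -
  { fix w assume "p w + q w \<noteq> 0"
    then have "p w \<noteq> 0 \<or> q w \<noteq> 0" by auto
    then have "set w \<subseteq> {if b then LX else LY}" using assms unfolding ncalg_def by blast }
  then show ?thesis unfolding ncalg_def by blast
qed
lemma ncalg_diff: assumes "p \<in> ncalg b" "q \<in> ncalg b" shows "(\<lambda>w. p w - q w) \<in> ncalg b"
proof -
  { fix w assume "p w - q w \<noteq> 0"
    then have "p w \<noteq> 0 \<or> q w \<noteq> 0" by auto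
    then have "set w \<subseteq> {if b then LX else LY}" using assms unfolding ncalg_def by blast }
  then show ?thesis unfolding ncalg_def by blast
qed
lemma ncalg_smult: "p \<in> ncalg b \<Longrightarrow> (\<lambda>w. c * p w) \<in> ncalg b"
  unfolding ncalg_def by auto

lemma lin_eq: "finite W \<Longrightarrow> {w. p w \<noteq> 0} \<subseteq> W \<Longrightarrow> lin \<theta> p = (\<Sum>w\<in>W. p w * \<theta> w)"
  unfolding lin_def by (rule sum.mono_neutral_left) auto

lemma lin_add: "ncfin p \<Longrightarrow> ncfin q \<Longrightarrow> lin \<theta> (\<lambda>w. p w + q w) = lin \<theta> p + lin \<theta> q"
proof -
  assume "ncfin p" "ncfin q"
  let ?W = "{w. p w \<noteq> 0} \<union> {w. q w \<noteq> 0}"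
  have f: "finite ?W" using \<open>ncfin p\<close> \<open>ncfin q\<close> by (simp add: ncfin_def)
  have "lin \<theta> (\<lambda>w. p w + q w) = (\<Sum>w\<in>?W. (p w + q w) * \<theta> w)" by (rule lin_eq[OF f]) auto
  also have "\<dots> = (\<Sum>w\<in>?W. p w * \<theta> w) + (\<Sum>w\<in>?W. q w * \<theta> w)"
    by (simp add: algebra_simps sum.distrib)
  also have "\<dots> = lin \<theta> p + lin \<theta> q"
    using lin_eq[OF f, of p \<theta>] lin_eq[OF f, of q \<theta>] by auto
  finally show ?thesis .
qed

lemma lin_diff: "ncfin p \<Longrightarrow> ncfin q \<Longrightarrow> lin \<theta> (\<lambda>w. p w - q w) = lin \<theta> p - lin \<theta> q"
proof -
  assume "ncfin p" "ncfin q"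
  let ?W = "{w. p w \<noteq> 0} \<union> {w. q w \<noteq> 0}"
  have f: "finite ?W" using \<open>ncfin p\<close> \<open>ncfin q\<close> by (simp add: ncfin_def)
  have "lin \<theta> (\<lambda>w. p w - q w) = (\<Sum>w\<in>?W. (p w - q w) * \<theta> w)" by (rule lin_eq[OF f]) auto
  also have "\<dots> = (\<Sum>w\<in>?W. p w * \<theta> w) - (\<Sum>w\<in>?W. q w * \<theta> w)"
    by (simp add: algebra_simps sum_subtractf)
  also have "\<dots> = lin \<theta> p - lin \<theta> q"
    using lin_eq[OF f, of p \<theta>] lin_eq[OF f, of q \<theta>] by auto
  finally show ?thesis .
qed

lemma lin_smult: "ncfin p \<Longrightarrow> lin \<theta> (\<lambda>w. c * p w) = c * lin \<theta> p"
proof -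
  assume "ncfin p"
  let ?W = "{w. p w \<noteq> 0}"
  have f: "finite ?W" using \<open>ncfin p\<close> by (simp add: ncfin_def)
  have "lin \<theta> (\<lambda>w. c * p w) = (\<Sum>w\<in>?W. (c * p w) * \<theta> w)" by (rule lin_eq[OF f]) auto
  also have "\<dots> = c * lin \<theta> p" by (simp add: lin_def sum_distrib_left mult.assoc)
  finally show ?thesis .
qed

lemma lin_zero[simp]: "lin \<theta> (\<lambda>w. 0) = 0" by (simp add: lin_def)

lemma lin_mono[simp]: "lin \<theta> (mon u) = \<theta> u"
  by (subst lin_eq[of "{u}"]) (auto simp: mon_def)

lemma lin_one: "lin \<theta> ncone = \<theta> []" by (simp add: ncone_mono)

lemma lin_sum_mono: "finite K \<Longrightarrow> lin \<theta> (\<lambda>w. \<Sum>k\<in>K. c k * mon (f k) w) = (\<Sum>k\<in>K. c k * \<theta> (f k))"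
proof -
  assume K: "finite K"
  have "lin \<theta> (\<lambda>w. \<Sum>k\<in>K. c k * mon (f k) w) = (\<Sum>w\<in>f ` K. (\<Sum>k\<in>K. c k * mon (f k) w) * \<theta> w)"
  proof (rule lin_eq)
    show "finite (f ` K)" using K by simp
    show "{w. (\<Sum>k\<in>K. c k * mon (f k) w) \<noteq> 0} \<subseteq> f ` K"
    proof
      fix x assume x: "x \<in> {w. (\<Sum>k\<in>K. c k * mon (f k) w) \<noteq> 0}"
      show "x \<in> f ` K"
      proof (rule ccontr)
        assume "x \<notin> f ` K"
        then have "\<forall>k\<in>K. c k * mon (f k) x = 0" by (auto simp: mon_def)
        then have "(\<Sum>k\<in>K. c k * mon (f k) x) = 0" by (rule sum.neutral)
        then show False using x by simp
      qed
    qed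
  qed
  also have "\<dots> = (\<Sum>k\<in>K. \<Sum>w\<in>f ` K. c k * mon (f k) w * \<theta> w)"
    by (simp add: sum_distrib_right) (rule sum.swap)
  also have "\<dots> = (\<Sum>k\<in>K. c k * \<theta> (f k))"
  proof (rule sum.cong[OF refl])
    fix k assume k: "k \<in> K"
    have "(\<Sum>w\<in>f ` K. c k * mon (f k) w * \<theta> w) = (\<Sum>w\<in>f ` K. if w = f k then c k * \<theta> (f k) else 0)"
      by (rule sum.cong) (auto simp: mon_def)
    also have "\<dots> = c k * \<theta> (f k)" using k K by (subst sum.delta) auto
    finally show "(\<Sum>w\<in>f ` K. c k * mon (f k) w * \<theta> w) = c k * \<theta> (f k)" .
  qed
  finally show ?thesis .
qed

lemma ncprod_snoc: "ncprod (xs @ [p]) = ncmul (ncprod xs) p"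
  by (induction xs) (auto simp: ncprod_def ncmul_assoc)

lemma ncprod_Cons: "ncprod (p # xs) = ncmul p (ncprod xs)"
  by (simp add: ncprod_def)

lemma ncfin_ncprod: "\<forall>p\<in>set xs. ncfin p \<Longrightarrow> ncfin (ncprod xs)"
  by (induction xs) (auto simp: ncprod_def intro: ncfin_mul)

definition cen :: "(word \<Rightarrow> complex) \<Rightarrow> ncp \<Rightarrow> ncp" where
  "cen \<theta> p = (\<lambda>w. p w - lin \<theta> p * ncone w)"

lemma cen_decomp: "p = (\<lambda>w. cen \<theta> p w + lin \<theta> p * ncone w)"
  by (simp add: cen_def)

lemma cen_fin: "ncfin p \<Longrightarrow> ncfin (cen \<theta> p)"
  unfolding cen_def by (intro ncfin_diff ncfin_smult) auto

lemma cen_alg: "p \<in> ncalg b \<Longrightarrow> cen \<theta> p \<in> ncalg b"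
  unfolding cen_def by (intro ncalg_diff ncalg_smult) auto

lemma cen_lin: "ncfin p \<Longrightarrow> \<theta> [] = 1 \<Longrightarrow> lin \<theta> (cen \<theta> p) = 0"
  unfolding cen_def by (subst lin_diff) (auto intro: ncfin_smult simp: lin_smult lin_one)

definition good :: "(word \<Rightarrow> complex) \<Rightarrow> (word \<Rightarrow> complex) \<Rightarrow> bool \<Rightarrow> (bool \<times> ncp) list \<Rightarrow> bool" where
  "good \<phi> \<psi> b us \<longleftrightarrow> us \<noteq> [] \<and> fst (hd us) = b \<and> (\<forall>(c,u)\<in>set us. ncfin u \<and> u \<in> ncalg c)
     \<and> lin \<phi> (snd (hd us)) = 0 \<and> (\<forall>(c,u)\<in>set (tl us). lin \<psi> u = 0) \<and> successively (\<noteq>) (map fst us)"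

inductive_set VS :: "(word \<Rightarrow> complex) \<Rightarrow> (word \<Rightarrow> complex) \<Rightarrow> bool \<Rightarrow> ncp set"
  for \<phi> \<psi> b where
  V0: "(\<lambda>w. 0) \<in> VS \<phi> \<psi> b"
| Vadd: "p \<in> VS \<phi> \<psi> b \<Longrightarrow> q \<in> VS \<phi> \<psi> b \<Longrightarrow> (\<lambda>w. p w + q w) \<in> VS \<phi> \<psi> b"
| Vsm: "p \<in> VS \<phi> \<psi> b \<Longrightarrow> (\<lambda>w. c * p w) \<in> VS \<phi> \<psi> b"
| Vgen: "good \<phi> \<psi> b us \<Longrightarrow> ncprod (map snd us) \<in> VS \<phi> \<psi> b"

lemma ncprod_single[simp]: "ncprod [p] = p" by (simp add: ncprod_def)

lemma good_lin:
  assumes cf: "cfree \<phi> \<psi>" and u1: "\<phi> [] = 1" and u2: "\<psi> [] = 1" and g: "good \<phi> \<psi> b us"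
  shows "ncfin (ncprod (map snd us)) \<and> lin \<phi> (ncprod (map snd us)) = 0"
proof -
  have fin: "ncfin (ncprod (map snd us))"
    using g by (intro ncfin_ncprod) (auto simp: good_def)
  obtain b1 v1 rest where us: "us = (b1, v1) # rest" using g by (cases us) (auto simp: good_def)
  have v1: "ncfin v1" "v1 \<in> ncalg b1" "lin \<phi> v1 = 0" using g us by (auto simp: good_def)
  have rest: "\<forall>(c,u)\<in>set rest. ncfin u \<and> u \<in> ncalg c \<and> lin \<psi> u = 0" using g us by (auto simp: good_def)
  have succ: "successively (\<noteq>) (map fst us)" using g by (simp add: good_def)
  show ?thesis
  proof (cases "rest = []")
    case True
    then show ?thesis using us v1 fin by simp
  next
    case False
    let ?R = "ncprod (map snd rest)"
    let ?c = "cen \<psi> v1"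
    have Rfin: "ncfin ?R" using rest by (intro ncfin_ncprod) auto
    have cfin: "ncfin ?c" using v1 by (simp add: cen_fin)
    have eq: "ncprod (map snd us) = (\<lambda>w. ncmul ?c ?R w + lin \<psi> v1 * ?R w)"
    proof -
      have "ncprod (map snd us) = ncmul (\<lambda>w. ?c w + lin \<psi> v1 * ncone w) ?R"
        using us cen_decomp[of v1 \<psi>] by (simp add: ncprod_Cons)
      also have "\<dots> = (\<lambda>w. ncmul ?c ?R w + lin \<psi> v1 * ?R w)"
        by (simp add: ncmul_add_left ncmul_smult_left)
      finally show ?thesis .
    qed
    have sr: "successively (\<noteq>) (map fst rest)" using succ us
      by (cases rest) auto
    have A: "lin \<phi> ?R = (\<Prod>u\<leftarrow>map snd rest. lin \<phi> u)"
      using cf[unfolded cfree_def, THEN spec[where x="rest"]] False rest sr by blast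
    have B: "lin \<phi> (ncprod (map snd ((b1, ?c) # rest))) = (\<Prod>u\<leftarrow>map snd ((b1, ?c) # rest). lin \<phi> u)"
    proof -
      have conds: "\<forall>(b, u)\<in>set ((b1, ?c) # rest). ncfin u \<and> u \<in> ncalg b \<and> lin \<psi> u = 0"
        using rest cfin cen_alg[OF v1(2)] cen_lin[of v1 \<psi>, OF v1(1) u2] by auto
      have s2: "successively (\<noteq>) (map fst ((b1, ?c) # rest))" using succ us by simp
      show ?thesis using cf[unfolded cfree_def, THEN spec[where x="(b1, ?c) # rest"]] conds s2 by blast
    qed
    have cl: "lin \<phi> ?c = - lin \<psi> v1"
      unfolding cen_def using v1 u1 by (subst lin_diff) (auto intro: ncfin_smult simp: lin_smult lin_one)
    have "lin \<phi> (ncprod (map snd us)) = lin \<phi> (ncmul ?c ?R) + lin \<psi> v1 * lin \<phi> ?R"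
      unfolding eq by (subst lin_add) (auto intro: ncfin_mul ncfin_smult cfin Rfin simp: lin_smult Rfin)
    also have "\<dots> = 0" using A B cl by (simp add: ncprod_Cons)
    finally show ?thesis using fin by simp
  qed
qed

lemma VS_lin:
  assumes cf: "cfree \<phi> \<psi>" and u1: "\<phi> [] = 1" and u2: "\<psi> [] = 1"
  shows "p \<in> VS \<phi> \<psi> b \<Longrightarrow> ncfin p \<and> lin \<phi> p = 0"
proof (induction rule: VS.induct)
  case V0 then show ?case by simp
next
  case (Vadd p q) then show ?case by (simp add: lin_add ncfin_add)
next
  case (Vsm p c) then show ?case by (simp add: lin_smult ncfin_smult)
next
  case (Vgen us) then show ?case using good_lin[OF cf u1 u2] by blast
qed


lemma good_mul:
  assumes u1: "\<phi> [] = 1" and u2: "\<psi> [] = 1" and g: "good \<phi> \<psi> b us"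
  shows "\<exists>q k. q \<in> VS \<phi> \<psi> b \<and> ncmul (ncprod (map snd us)) (ncvar c) = (\<lambda>w. q w + k * ncone w)
            \<and> ((c = LX) \<noteq> b \<longrightarrow> k = 0)"
proof -
  obtain init bl ul where us: "us = init @ [(bl, ul)]" using g
    by (cases us rule: rev_exhaust) (auto simp: good_def)
  have ul: "ncfin ul" "ul \<in> ncalg bl" using g us by (auto simp: good_def)
  have usne: "us \<noteq> []" using us by simp
  have succ: "successively (\<noteq>) (map fst us)" using g by (simp add: good_def)
  let ?bc = "c = LX"
  let ?P = "ncprod (map snd us)"
  have cv: "ncvar c \<in> ncalg ?bc" by (rule ncalg_var)
  show ?thesis
  proof (cases "?bc = bl")
    case False
    let ?c' = "cen \<psi> (ncvar c)"
    let ?us2 = "us @ [(?bc, ?c')]"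
    have c'l: "lin \<psi> ?c' = 0" using cen_lin[of "ncvar c" \<psi>] u2 by simp
    have g2: "good \<phi> \<psi> b ?us2"
      using g False us usne succ cen_fin[of "ncvar c" \<psi>] cen_alg[OF cv, of \<psi>] c'l
      by (auto simp: good_def successively_append_iff hd_append tl_append2)
    have "ncmul ?P (ncvar c) = ncmul ?P (\<lambda>w. ?c' w + lin \<psi> (ncvar c) * ncone w)"
      by (simp add: cen_def)
    also have "\<dots> = (\<lambda>w. ncprod (map snd ?us2) w + lin \<psi> (ncvar c) * ?P w)"
      by (simp add: ncmul_add_right ncmul_smult_right ncprod_snoc)
    finally have eq: "ncmul ?P (ncvar c) = (\<lambda>w. ncprod (map snd ?us2) w + lin \<psi> (ncvar c) * ?P w)" .
    have "(\<lambda>w. ncprod (map snd ?us2) w + lin \<psi> (ncvar c) * ?P w) \<in> VS \<phi> \<psi> b"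
      by (intro Vadd Vsm Vgen g2 g)
    then show ?thesis using eq by (intro exI[of _ "(\<lambda>w. ncprod (map snd ?us2) w + lin \<psi> (ncvar c) * ?P w)"] exI[of _ 0]) simp
  next
    case True
    let ?ulc = "ncmul ul (ncvar c)"
    have ulc: "ncfin ?ulc" "?ulc \<in> ncalg bl" using ul cv True by (auto intro: ncfin_mul ncalg_mul)
    have Pc: "ncmul ?P (ncvar c) = ncmul (ncprod (map snd init)) ?ulc"
      using us by (simp add: ncprod_snoc ncmul_assoc)
    show ?thesis
    proof (cases "init = []")
      case False
      let ?d = "cen \<psi> ?ulc"
      let ?us2 = "init @ [(bl, ?d)]"
      let ?Pi = "ncprod (map snd init)"
      have dl: "lin \<psi> ?d = 0" using cen_lin[of ?ulc \<psi>] u2 ulc by simp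
      have mf: "map fst ?us2 = map fst us" using us by simp
      have g2: "good \<phi> \<psi> b ?us2"
        using g False us succ cen_fin[OF ulc(1), of \<psi>] cen_alg[OF ulc(2), of \<psi>] dl mf
        by (auto simp: good_def hd_append tl_append2)
      have gi: "good \<phi> \<psi> b init"
        using g False us succ
        by (auto simp: good_def hd_append tl_append2 successively_append_iff)
      have "ncmul ?P (ncvar c) = ncmul ?Pi (\<lambda>w. ?d w + lin \<psi> ?ulc * ncone w)"
        unfolding Pc by (simp add: cen_def)
      also have "\<dots> = (\<lambda>w. ncprod (map snd ?us2) w + lin \<psi> ?ulc * ?Pi w)"
        by (simp add: ncmul_add_right ncmul_smult_right ncprod_snoc)
      finally have eq: "ncmul ?P (ncvar c) = (\<lambda>w. ncprod (map snd ?us2) w + lin \<psi> ?ulc * ?Pi w)" .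
      have "(\<lambda>w. ncprod (map snd ?us2) w + lin \<psi> ?ulc * ?Pi w) \<in> VS \<phi> \<psi> b"
        by (intro Vadd Vsm Vgen g2 gi)
      then show ?thesis using eq by (intro exI[of _ "(\<lambda>w. ncprod (map snd ?us2) w + lin \<psi> ?ulc * ?Pi w)"] exI[of _ 0]) simp
    next
      case True
      then have us1: "us = [(bl, ul)]" using us by simp
      then have blb: "bl = b" using g by (simp add: good_def)
      let ?d = "cen \<phi> ?ulc"
      have dl: "lin \<phi> ?d = 0" using cen_lin[of ?ulc \<phi>] u1 ulc by simp
      have g2: "good \<phi> \<psi> b [(bl, ?d)]"
        using blb cen_fin[OF ulc(1), of \<phi>] cen_alg[OF ulc(2), of \<phi>] dl by (simp add: good_def)
      have eq: "ncmul ?P (ncvar c) = (\<lambda>w. ?d w + lin \<phi> ?ulc * ncone w)"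
        using us1 by (simp add: cen_def)
      have "?d \<in> VS \<phi> \<psi> b" using Vgen[OF g2] by simp
      then show ?thesis using eq \<open>?bc = bl\<close> blb by blast
    qed
  qed
qed

lemma VS_mul:
  assumes u1: "\<phi> [] = 1" and u2: "\<psi> [] = 1"
  shows "p \<in> VS \<phi> \<psi> b \<Longrightarrow> \<exists>q k. q \<in> VS \<phi> \<psi> b \<and> ncmul p (ncvar c) = (\<lambda>w. q w + k * ncone w)
            \<and> ((c = LX) \<noteq> b \<longrightarrow> k = 0)"
proof (induction rule: VS.induct)
  case V0
  have "ncmul (\<lambda>w. 0) (ncvar c) = (\<lambda>w. (\<lambda>w. 0) w + 0 * ncone w)"
    by (simp add: ncmul_def)
  then show ?case using VS.V0 by blast
next
  case (Vadd p q)
  then obtain q1 k1 q2 k2 where h: "q1 \<in> VS \<phi> \<psi> b" "ncmul p (ncvar c) = (\<lambda>w. q1 w + k1 * ncone w)"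
    "(c = LX) \<noteq> b \<longrightarrow> k1 = 0" "q2 \<in> VS \<phi> \<psi> b" "ncmul q (ncvar c) = (\<lambda>w. q2 w + k2 * ncone w)"
    "(c = LX) \<noteq> b \<longrightarrow> k2 = 0" by blast
  have "ncmul (\<lambda>w. p w + q w) (ncvar c) = (\<lambda>w. (\<lambda>w. q1 w + q2 w) w + (k1 + k2) * ncone w)"
    by (simp add: ncmul_add_left h(2,5) algebra_simps)
  moreover have "(\<lambda>w. q1 w + q2 w) \<in> VS \<phi> \<psi> b" using h by (intro VS.Vadd)
  ultimately show ?case using h(3,6) by (intro exI[of _ "\<lambda>w. q1 w + q2 w"] exI[of _ "k1 + k2"]) simp
next
  case (Vsm p a)
  then obtain q1 k1 where h: "q1 \<in> VS \<phi> \<psi> b" "ncmul p (ncvar c) = (\<lambda>w. q1 w + k1 * ncone w)"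
    "(c = LX) \<noteq> b \<longrightarrow> k1 = 0" by blast
  have "ncmul (\<lambda>w. a * p w) (ncvar c) = (\<lambda>w. (\<lambda>w. a * q1 w) w + (a * k1) * ncone w)"
    by (simp add: ncmul_smult_left h(2) algebra_simps)
  moreover have "(\<lambda>w. a * q1 w) \<in> VS \<phi> \<psi> b" using h by (intro VS.Vsm)
  ultimately show ?case using h(3) by (intro exI[of _ "\<lambda>w. a * q1 w"] exI[of _ "a * k1"]) simp
next
  case (Vgen us)
  then show ?case using good_mul[of \<phi> \<psi>, OF u1 u2] by blast
qed

declare bcum.simps[simp del]

definition Sb :: "(word \<Rightarrow> complex) \<Rightarrow> word \<Rightarrow> ncp" where
  "Sb \<phi> w = (\<lambda>x. \<Sum>k\<in>{0..length w}. (if k = 0 then 1 else - bcum \<phi> (take k w)) * mon (drop k w) x)"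

lemma bcum_ne: "w \<noteq> [] \<Longrightarrow> bcum \<phi> w = \<phi> w - (\<Sum>k\<in>{1..<length w}. bcum \<phi> (take k w) * \<phi> (drop k w))"
  by (subst bcum.simps) simp

lemma ncmul_Sb: "ncmul (Sb \<phi> w) (ncvar c) =
   (\<lambda>x. \<Sum>k\<in>{0..length w}. (if k = 0 then 1 else - bcum \<phi> (take k w)) * mon (drop k w @ [c]) x)"
  unfolding Sb_def ncvar_mono by (simp add: ncmul_sum_left ncmul_smult_left ncmul_mono_mono)

lemma bcum_snoc:
  assumes "w \<noteq> []"
  shows "bcum \<phi> (w @ [c]) = lin \<phi> (ncmul (Sb \<phi> w) (ncvar c))"
proof -
  let ?n = "length w"
  have "lin \<phi> (ncmul (Sb \<phi> w) (ncvar c)) =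
     (\<Sum>k\<in>{0..?n}. (if k = 0 then 1 else - bcum \<phi> (take k w)) * \<phi> (drop k w @ [c]))"
    unfolding ncmul_Sb by (rule lin_sum_mono) simp
  also have "\<dots> = \<phi> (w @ [c]) + (\<Sum>k\<in>{Suc 0..?n}. - bcum \<phi> (take k w) * \<phi> (drop k w @ [c]))"
    by (subst sum.atLeast_Suc_atMost) auto
  also have "\<dots> = \<phi> (w @ [c]) - (\<Sum>k\<in>{1..<length (w @ [c])}. bcum \<phi> (take k (w @ [c])) * \<phi> (drop k (w @ [c])))"
  proof -
    have "(\<Sum>k\<in>{1..<length (w @ [c])}. bcum \<phi> (take k (w @ [c])) * \<phi> (drop k (w @ [c])))
        = (\<Sum>k\<in>{Suc 0..?n}. bcum \<phi> (take k w) * \<phi> (drop k w @ [c]))"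
      by (rule sum.cong) auto
    then show ?thesis by (simp add: sum_negf)
  qed
  also have "\<dots> = bcum \<phi> (w @ [c])" by (rule bcum_ne[symmetric]) simp
  finally show ?thesis ..
qed

lemma Sb_snoc:
  assumes "w \<noteq> []"
  shows "Sb \<phi> (w @ [c]) = (\<lambda>x. ncmul (Sb \<phi> w) (ncvar c) x - bcum \<phi> (w @ [c]) * ncone x)"
proof
  fix x
  let ?n = "length w"
  have "Sb \<phi> (w @ [c]) x = (\<Sum>k\<in>{0..Suc ?n}. (if k = 0 then 1 else - bcum \<phi> (take k (w @ [c]))) * mon (drop k (w @ [c])) x)"
    by (simp add: Sb_def)
  also have "\<dots> = (\<Sum>k\<in>{0..?n}. (if k = 0 then 1 else - bcum \<phi> (take k (w @ [c]))) * mon (drop k (w @ [c])) x)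
       - bcum \<phi> (w @ [c]) * mon [] x"
    by (subst sum.atLeast0_atMost_Suc) simp
  also have "(\<Sum>k\<in>{0..?n}. (if k = 0 then 1 else - bcum \<phi> (take k (w @ [c]))) * mon (drop k (w @ [c])) x)
      = (\<Sum>k\<in>{0..?n}. (if k = 0 then 1 else - bcum \<phi> (take k w)) * mon (drop k w @ [c]) x)"
    by (rule sum.cong) auto
  finally show "Sb \<phi> (w @ [c]) x = ncmul (Sb \<phi> w) (ncvar c) x - bcum \<phi> (w @ [c]) * ncone x"
    by (simp add: ncmul_Sb ncone_mono)
qed

lemma Sb_single: "Sb \<phi> [a] = (\<lambda>x. ncvar a x - \<phi> [a] * ncone x)"
proof -
  have b: "bcum \<phi> [a] = \<phi> [a]" by (subst bcum.simps) simp
  show ?thesis unfolding Sb_def by (rule ext) (simp add: b ncvar_mono ncone_mono)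
qed

lemma Sb_VS:
  assumes cf: "cfree \<phi> \<psi>" and u1: "\<phi> [] = 1" and u2: "\<psi> [] = 1"
  shows "w \<noteq> [] \<Longrightarrow> Sb \<phi> w \<in> VS \<phi> \<psi> (hd w = LX)"
proof (induction w rule: rev_induct)
  case Nil then show ?case by simp
next
  case (snoc c w)
  show ?case
  proof (cases "w = []")
    case True
    let ?S = "Sb \<phi> [c]"
    have f: "ncfin ?S" unfolding Sb_single by (intro ncfin_diff ncfin_smult) auto
    have a: "?S \<in> ncalg (c = LX)" unfolding Sb_single
      by (intro ncalg_diff ncalg_smult ncalg_var ncalg_one)
    have l: "lin \<phi> ?S = 0" unfolding Sb_single using u1
      by (subst lin_diff) (auto intro: ncfin_smult simp: lin_smult lin_one ncvar_mono)
    have "good \<phi> \<psi> (c = LX) [(c = LX, ?S)]" using f a l by (simp add: good_def)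
    from Vgen[OF this] show ?thesis using True by simp
  next
    case False
    then have IH: "Sb \<phi> w \<in> VS \<phi> \<psi> (hd w = LX)" using snoc.IH by simp
    obtain q k where h: "q \<in> VS \<phi> \<psi> (hd w = LX)" "ncmul (Sb \<phi> w) (ncvar c) = (\<lambda>x. q x + k * ncone x)"
      using VS_mul[of \<phi> \<psi>, OF u1 u2 IH, of c] by blast
    have q: "ncfin q" "lin \<phi> q = 0" using VS_lin[OF cf u1 u2 h(1)] by auto
    have "bcum \<phi> (w @ [c]) = lin \<phi> (\<lambda>x. q x + k * ncone x)"
      using bcum_snoc[OF False] h(2) by simp
    also have "\<dots> = k" using q u1 by (subst lin_add) (auto intro: ncfin_smult simp: lin_smult lin_one)
    finally have bk: "bcum \<phi> (w @ [c]) = k" .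
    have "Sb \<phi> (w @ [c]) = q" using Sb_snoc[OF False, of \<phi> c] h(2) bk by simp
    then show ?thesis using h(1) False by simp
  qed
qed

lemma bcum_vanish:
  assumes cf: "cfree \<phi> \<psi>" and u1: "\<phi> [] = 1" and u2: "\<psi> [] = 1"
    and ne: "u \<noteq> []" and hl: "hd u \<noteq> last u"
  shows "bcum \<phi> u = 0"
proof -
  obtain w c where u: "u = w @ [c]" using ne by (cases u rule: rev_exhaust) auto
  have wne: "w \<noteq> []" using u hl by auto
  have cw: "(c = LX) \<noteq> (hd w = LX)" using u hl wne by (cases c; cases "hd w") auto
  obtain q k where h: "q \<in> VS \<phi> \<psi> (hd w = LX)" "ncmul (Sb \<phi> w) (ncvar c) = (\<lambda>x. q x + k * ncone x)"
      "(c = LX) \<noteq> (hd w = LX) \<longrightarrow> k = 0"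
    using VS_mul[of \<phi> \<psi>, OF u1 u2 Sb_VS[OF cf u1 u2 wne], of c] by blast
  have q: "ncfin q" "lin \<phi> q = 0" using VS_lin[OF cf u1 u2 h(1)] by auto
  have "bcum \<phi> u = lin \<phi> q" using bcum_snoc[OF wne] h cw u by simp
  then show ?thesis using q by simp
qed

definition cm :: "complex^'n^'n \<Rightarrow> complex^'n^'n \<Rightarrow> L \<Rightarrow> complex^'n^'n" where
  "cm A B l = (if l = LX then A else B)"

definition cmat :: "complex^'n^'n \<Rightarrow> complex^'n^'n \<Rightarrow> word \<Rightarrow> complex^'n^'n::finite" where
  "cmat A B w = foldr (\<lambda>l M. cm A B l ** M) w (mat 1)"

definition Wd :: "nat \<Rightarrow> word set" where
  "Wd n = {w. length w = n}"

lemma finite_Wd[simp]: "finite (Wd n)"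
  using finite_lists_length_eq[of "UNIV :: L set" n] by (simp add: Wd_def)

lemma cmat_Nil[simp]: "cmat A B [] = mat 1" by (simp add: cmat_def)
lemma cmat_Cons[simp]: "cmat A B (l # w) = cm A B l ** cmat A B w" by (simp add: cmat_def)
lemma cmat_append: "cmat A B (u @ v) = cmat A B u ** cmat A B v"
  by (induction u) (auto simp: matrix_mul_assoc)

lemma ncmul_letters:
  assumes "\<forall>u. p u \<noteq> 0 \<longrightarrow> length u = 1"
  shows "ncmul p q w = (if w = [] then 0 else p [hd w] * q (tl w))"
proof (cases "w = []")
  case True
  have "p [] = 0" using assms by force
  then show ?thesis using True by (simp add: ncmul_def)
next
  case False
  have "ncmul p q w = (\<Sum>k\<in>{0..length w}. if k = 1 then p [hd w] * q (tl w) else 0)"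
    unfolding ncmul_def
  proof (rule sum.cong[OF refl])
    fix k assume k: "k \<in> {0..length w}"
    show "p (take k w) * q (drop k w) = (if k = 1 then p [hd w] * q (tl w) else 0)"
    proof (cases "k = 1")
      case True
      then show ?thesis using False by (cases w) auto
    next
      case False
      then have "length (take k w) \<noteq> 1" using k by auto
      then have "p (take k w) = 0" using assms by blast
      then show ?thesis using False by simp
    qed
  qed
  also have "\<dots> = p [hd w] * q (tl w)" using False by (subst sum.delta) (auto simp: Suc_le_eq)
  finally show ?thesis using False by simp
qed

lemma Psi_formula: "Psi A B n i j w = (if length w = n then cmat A B w $ i $ j else 0)"
proof (induction n arbitrary: i j w)
  case 0
  then show ?case by (simp add: Psi_def ncmatone_def ncone_def mat_def)
next
  case (Suc n)
  have P: "Psi A B (Suc n) = ncmatmul (linpenc A B) (Psi A B n)" by (simp add: Psi_def)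
  have lp: "\<forall>u. linpenc A B i k u \<noteq> 0 \<longrightarrow> length u = 1" for k by (auto simp: linpenc_def)
  have lp1: "linpenc A B i k [l] = cm A B l $ i $ k" for k l by (cases l) (auto simp: linpenc_def cm_def)
  have "Psi A B (Suc n) i j w = (\<Sum>k\<in>UNIV. ncmul (linpenc A B i k) (Psi A B n k j) w)"
    by (simp add: P ncmatmul_def)
  also have "\<dots> = (if w = [] then 0 else \<Sum>k\<in>UNIV. cm A B (hd w) $ i $ k * Psi A B n k j (tl w))"
    by (simp add: ncmul_letters[OF lp] lp1)
  also have "\<dots> = (if length w = Suc n then cmat A B w $ i $ j else 0)"
  proof (cases w)
    case Nil then show ?thesis by simp
  next
    case (Cons l v)
    then show ?thesis by (simp add: Suc.IH matrix_matrix_mult_def)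
  qed
  finally show ?case .
qed

lemma Psi_supp: "{w. Psi A B n i j w \<noteq> 0} \<subseteq> Wd n"
  by (auto simp: Psi_formula Wd_def split: if_splits)

lemma ncfin_Psi: "ncfin (Psi A B n i j)"
  unfolding ncfin_def by (rule finite_subset[OF Psi_supp finite_Wd])

lemma lin_Psi: "lin \<theta> (Psi A B n i j) = (\<Sum>w\<in>Wd n. cmat A B w $ i $ j * \<theta> w)"
  by (subst lin_eq[OF finite_Wd Psi_supp]) (rule sum.cong, simp_all add: Psi_formula Wd_def)

lemma ncmul_var: "ncmul (ncvar l) p w = (if w \<noteq> [] \<and> hd w = l then p (tl w) else 0)"
proof -
  have "\<forall>u. ncvar l u \<noteq> 0 \<longrightarrow> length u = 1" by (simp add: ncvar_def)
  then show ?thesis by (simp add: ncmul_letters ncvar_def)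
qed

lemma Wd_Suc_image: "Wd (Suc n) = (\<lambda>(l,v). l # v) ` (UNIV \<times> Wd n)"
proof
  show "Wd (Suc n) \<subseteq> (\<lambda>(l,v). l # v) ` (UNIV \<times> Wd n)"
  proof
    fix w assume "w \<in> Wd (Suc n)"
    then obtain l v where "w = l # v" "length v = n" by (cases w) (auto simp: Wd_def)
    then show "w \<in> (\<lambda>(l,v). l # v) ` (UNIV \<times> Wd n)" by (auto simp: Wd_def)
  qed
qed (auto simp: Wd_def)

lemma sum_Wd_Suc: "(\<Sum>w\<in>Wd (Suc n). g w) = (\<Sum>l\<in>UNIV. \<Sum>v\<in>Wd n. g (l # v))"
proof -
  have inj: "inj_on (\<lambda>(l,v). l # v) (UNIV \<times> Wd n)" by (auto simp: inj_on_def)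
  have "(\<Sum>w\<in>Wd (Suc n). g w) = (\<Sum>x\<in>UNIV \<times> Wd n. g ((\<lambda>(l,v). l # v) x))"
    unfolding Wd_Suc_image using sum.reindex[OF inj, of g] by (simp add: comp_def)
  also have "\<dots> = (\<Sum>l\<in>UNIV. \<Sum>v\<in>Wd n. g (l # v))"
    by (subst sum.cartesian_product) (simp add: case_prod_beta)
  finally show ?thesis .
qed

lemma sum_Wd_split:
  assumes "k \<le> n"
  shows "(\<Sum>w\<in>Wd n. g w) = (\<Sum>u\<in>Wd k. \<Sum>v\<in>Wd (n - k). g (u @ v))"
proof -
  have "(\<Sum>w\<in>Wd n. g w) = (\<Sum>x\<in>Wd k \<times> Wd (n - k). g (fst x @ snd x))"
    by (rule sum.reindex_bij_witness[where i="\<lambda>x. fst x @ snd x" and j="\<lambda>w. (take k w, drop k w)"])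
       (use assms in \<open>auto simp: Wd_def\<close>)
  also have "\<dots> = (\<Sum>u\<in>Wd k. \<Sum>v\<in>Wd (n - k). g (u @ v))"
    by (subst sum.cartesian_product) (simp add: case_prod_beta)
  finally show ?thesis .
qed

lemma lin_F: "lin (bdelta l \<phi>) (ncmul (ncvar l) (Psi A B n i j)) = (\<Sum>v\<in>Wd n. cmat A B v $ i $ j * bdelta l \<phi> (l # v))"
proof -
  let ?W = "(\<lambda>v. l # v) ` Wd n"
  have sub: "{w. ncmul (ncvar l) (Psi A B n i j) w \<noteq> 0} \<subseteq> ?W"
  proof
    fix w assume "w \<in> {w. ncmul (ncvar l) (Psi A B n i j) w \<noteq> 0}"
    then have "w \<noteq> []" "hd w = l" "length (tl w) = n"
      by (auto simp: ncmul_var Psi_formula split: if_splits)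
    then show "w \<in> ?W" by (intro image_eqI[of _ _ "tl w"]) (auto simp: Wd_def)
  qed
  have "lin (bdelta l \<phi>) (ncmul (ncvar l) (Psi A B n i j))
      = (\<Sum>w\<in>?W. ncmul (ncvar l) (Psi A B n i j) w * bdelta l \<phi> w)"
    by (rule lin_eq[OF _ sub]) simp
  also have "\<dots> = (\<Sum>v\<in>Wd n. ncmul (ncvar l) (Psi A B n i j) (l # v) * bdelta l \<phi> (l # v))"
    by (subst sum.reindex) (auto simp: inj_on_def)
  also have "\<dots> = (\<Sum>v\<in>Wd n. cmat A B v $ i $ j * bdelta l \<phi> (l # v))"
    by (rule sum.cong) (auto simp: ncmul_var Psi_formula Wd_def)
  finally show ?thesis .
qed

definition sm :: "complex \<Rightarrow> complex^'n^'n \<Rightarrow> complex^'n^'n" where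
  "sm c M = (\<chi> i j. c * M $ i $ j)"

lemma mm_sum_left: "(\<Sum>k\<in>K. f k) ** (M :: complex^'n^'n) = (\<Sum>k\<in>K. f k ** M)"
  unfolding matrix_matrix_mult_def vec_eq_iff by (simp add: sum_distrib_right) (intro allI sum.swap)

lemma mm_sum_right: "(M :: complex^'n^'n) ** (\<Sum>k\<in>K. f k) = (\<Sum>k\<in>K. M ** f k)"
  unfolding matrix_matrix_mult_def vec_eq_iff by (simp add: sum_distrib_left) (intro allI sum.swap)

lemma sm_mm: "sm a M ** sm b N = sm (a * b) (M ** N)"
  by (simp add: matrix_matrix_mult_def vec_eq_iff sm_def sum_distrib_left algebra_simps)

lemma mm_sm: "M ** sm b N = sm b (M ** N)"
  by (simp add: matrix_matrix_mult_def vec_eq_iff sm_def sum_distrib_left algebra_simps)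

lemma sum_sm: "(\<Sum>k\<in>K. sm (c k) M) = sm (\<Sum>k\<in>K. c k) M"
  by (simp add: vec_eq_iff sm_def sum_distrib_right)

definition momM :: "(word \<Rightarrow> complex) \<Rightarrow> complex^'n^'n \<Rightarrow> complex^'n^'n \<Rightarrow> nat \<Rightarrow> complex^'n^'n::finite" where
  "momM \<phi> A B n = (\<chi> i j. lin \<phi> (Psi A B n i j))"

definition FM :: "L \<Rightarrow> (word \<Rightarrow> complex) \<Rightarrow> complex^'n^'n \<Rightarrow> complex^'n^'n \<Rightarrow> nat \<Rightarrow> complex^'n^'n::finite" where
  "FM l \<phi> A B n = (\<chi> i j. lin (bdelta l \<phi>) (ncmul (ncvar l) (Psi A B n i j)))"

lemma momM_eq: "momM \<phi> A B n = (\<Sum>w\<in>Wd n. sm (\<phi> w) (cmat A B w))"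
  by (simp add: momM_def vec_eq_iff lin_Psi sm_def mult.commute)

lemma FM_eq: "FM l \<phi> A B n = (\<Sum>v\<in>Wd n. sm (bdelta l \<phi> (l # v)) (cmat A B v))"
  by (simp add: FM_def vec_eq_iff lin_F sm_def mult.commute)

lemma Wd0: "Wd 0 = {[]}" by (auto simp: Wd_def)

lemma momM_0: "\<phi> [] = 1 \<Longrightarrow> momM \<phi> A B 0 = mat 1"
  by (simp add: momM_eq Wd0 sm_def mat_def vec_eq_iff)

lemma phi_expand:
  assumes "\<phi> [] = 1" "w \<noteq> []"
  shows "\<phi> w = (\<Sum>s\<in>{1..length w}. bcum \<phi> (take s w) * \<phi> (drop s w))"
proof -
  obtain m where m: "length w = Suc m" using assms(2) by (cases w) auto
  have "(\<Sum>s\<in>{1..length w}. bcum \<phi> (take s w) * \<phi> (drop s w))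
      = (\<Sum>s\<in>{1..<length w}. bcum \<phi> (take s w) * \<phi> (drop s w)) + bcum \<phi> w"
    using m assms(1) by (simp add: atLeastLessThanSuc_atLeastAtMost)
  also have "\<dots> = \<phi> w" using bcum_ne[OF assms(2), of \<phi>] by simp
  finally show ?thesis ..
qed

lemma bcum_bdelta:
  assumes cf: "cfree \<phi> \<psi>" and u1: "\<phi> [] = 1" and u2: "\<psi> [] = 1"
  shows "bcum \<phi> (l # v) = bdelta l \<phi> (l # v)"
proof (cases "last (l # v) = l")
  case True then show ?thesis by (simp add: bdelta_def)
next
  case False
  then have "bcum \<phi> (l # v) = 0" using bcum_vanish[OF cf u1 u2, of "l # v"] by auto
  then show ?thesis using False by (simp add: bdelta_def)
qed

lemma momM_rec:
  assumes cf: "cfree \<phi> \<psi>" and u1: "\<phi> [] = 1" and u2: "\<psi> [] = 1"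
  shows "momM \<phi> A B (Suc n) = (\<Sum>t\<in>{0..n}. (A ** FM LX \<phi> A B t + B ** FM LY \<phi> A B t) ** momM \<phi> A B (n - t))"
proof -
  have G: "(\<Sum>u\<in>Wd (Suc t). sm (bcum \<phi> u) (cmat A B u)) = A ** FM LX \<phi> A B t + B ** FM LY \<phi> A B t" for t
  proof -
    have "(\<Sum>u\<in>Wd (Suc t). sm (bcum \<phi> u) (cmat A B u))
       = (\<Sum>l\<in>UNIV. \<Sum>v\<in>Wd t. sm (bdelta l \<phi> (l # v)) (cm A B l ** cmat A B v))"
      by (simp add: sum_Wd_Suc bcum_bdelta[OF cf u1 u2])
    also have "\<dots> = (\<Sum>l\<in>UNIV. cm A B l ** FM l \<phi> A B t)"
      by (simp add: FM_eq mm_sum_right mm_sm)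
    also have "\<dots> = A ** FM LX \<phi> A B t + B ** FM LY \<phi> A B t"
    proof -
      have U: "(UNIV :: L set) = {LX, LY}" by (auto intro: L.exhaust)
      show ?thesis by (simp add: U cm_def)
    qed
    finally show ?thesis .
  qed
  have "momM \<phi> A B (Suc n) = (\<Sum>w\<in>Wd (Suc n). \<Sum>s\<in>{1..Suc n}. sm (bcum \<phi> (take s w) * \<phi> (drop s w)) (cmat A B w))"
    unfolding momM_eq
  proof (rule sum.cong[OF refl])
    fix w assume "w \<in> Wd (Suc n)"
    then have w: "length w = Suc n" "w \<noteq> []" by (auto simp: Wd_def)
    show "sm (\<phi> w) (cmat A B w) = (\<Sum>s\<in>{1..Suc n}. sm (bcum \<phi> (take s w) * \<phi> (drop s w)) (cmat A B w))"
      using phi_expand[of \<phi> w, OF u1 w(2)] w(1) by (simp add: sum_sm)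
  qed
  also have "\<dots> = (\<Sum>s\<in>{1..Suc n}. \<Sum>w\<in>Wd (Suc n). sm (bcum \<phi> (take s w) * \<phi> (drop s w)) (cmat A B w))"
    by (rule sum.swap)
  also have "\<dots> = (\<Sum>s\<in>{1..Suc n}. (\<Sum>u\<in>Wd s. sm (bcum \<phi> u) (cmat A B u)) ** momM \<phi> A B (Suc n - s))"
  proof (rule sum.cong[OF refl])
    fix s assume s: "s \<in> {1..Suc n}"
    have "(\<Sum>w\<in>Wd (Suc n). sm (bcum \<phi> (take s w) * \<phi> (drop s w)) (cmat A B w))
        = (\<Sum>u\<in>Wd s. \<Sum>v\<in>Wd (Suc n - s). sm (bcum \<phi> u * \<phi> v) (cmat A B u ** cmat A B v))"
      using s by (subst sum_Wd_split[of s]) (auto simp: Wd_def cmat_append intro!: sum.cong)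
    also have "\<dots> = (\<Sum>u\<in>Wd s. sm (bcum \<phi> u) (cmat A B u)) ** momM \<phi> A B (Suc n - s)"
      by (simp add: momM_eq mm_sum_left mm_sum_right sm_mm) (rule sum.swap)
    finally show "(\<Sum>w\<in>Wd (Suc n). sm (bcum \<phi> (take s w) * \<phi> (drop s w)) (cmat A B w))
        = (\<Sum>u\<in>Wd s. sm (bcum \<phi> u) (cmat A B u)) ** momM \<phi> A B (Suc n - s)" .
  qed
  also have "\<dots> = (\<Sum>t\<in>{0..n}. (\<Sum>u\<in>Wd (Suc t). sm (bcum \<phi> u) (cmat A B u)) ** momM \<phi> A B (n - t))"
  proof -
    have e: "{1..Suc n} = {Suc 0..Suc n}" by simp
    show ?thesis unfolding e sum.shift_bounds_cl_Suc_ivl by simp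
  qed
  also have "\<dots> = (\<Sum>t\<in>{0..n}. (A ** FM LX \<phi> A B t + B ** FM LY \<phi> A B t) ** momM \<phi> A B (n - t))"
    by (simp add: G)
  finally show ?thesis .
qed

definition cf :: "complex fps^'n^'n \<Rightarrow> nat \<Rightarrow> complex^'n^'n::finite" where
  "cf F n = (\<chi> i j. fps_nth (F $ i $ j) n)"

lemma cf_ext:
  assumes "\<And>n. cf F n = cf G n"
  shows "F = G"
  unfolding vec_eq_iff
proof (intro allI fps_ext)
  fix i j n
  have "cf F n $ i $ j = cf G n $ i $ j" using assms by simp
  then show "fps_nth (F $ i $ j) n = fps_nth (G $ i $ j) n" by (simp add: cf_def)
qed

lemma cf_mult: "cf (F ** G) n = (\<Sum>t\<in>{0..n}. cf F t ** cf G (n - t))"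
  unfolding cf_def matrix_matrix_mult_def vec_eq_iff
  by (simp add: fps_sum_nth fps_mult_nth) (intro allI sum.swap)

lemma cf_diff: "cf (F - G) n = cf F n - cf G n"
  by (simp add: cf_def vec_eq_iff)

lemma cf_one: "cf (mat 1) n = (if n = 0 then mat 1 else 0)"
  by (simp add: cf_def mat_def vec_eq_iff)

lemma cf_zmat: "cf (zmat A) n = (if n = 1 then A else 0)"
  by (auto simp: cf_def zmat_def vec_eq_iff)

lemma cf_zmul: "cf (zmat A ** F) n = (if n = 0 then 0 else A ** cf F (n - 1))"
proof -
  have "cf (zmat A ** F) n = (\<Sum>t\<in>{0..n}. if t = 1 then A ** cf F (n - t) else 0)"
    unfolding cf_mult by (rule sum.cong) (auto simp: cf_zmat)
  also have "\<dots> = (if n = 0 then 0 else A ** cf F (n - 1))"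
    by (subst sum.delta) auto
  finally show ?thesis .
qed

lemma cf_Mom: "cf (Mom \<phi> A B) n = momM \<phi> A B n"
  by (simp add: cf_def Mom_def momM_def)

lemma cf_Fser: "cf (Fser l \<phi> A B) n = FM l \<phi> A B n"
  by (simp add: cf_def Fser_def FM_def)

lemma neg_mm: "(- X) ** (Y :: complex^'n^'n) = - (X ** Y)"
  by (simp add: matrix_matrix_mult_def vec_eq_iff sum_negf)

lemma neg_mm2: "(- X - Y) ** (Z :: complex^'n^'n) = - ((X + Y) ** Z)"
  by (simp add: matrix_matrix_mult_def vec_eq_iff sum_negf algebra_simps sum.distrib sum_subtractf)

lemma right_inv:
  assumes cf: "cfree \<phi> \<psi>" and u1: "\<phi> [] = 1" and u2: "\<psi> [] = 1"
  shows "(mat 1 - zmat A ** Fser LX \<phi> A B - zmat B ** Fser LY \<phi> A B) ** Mom \<phi> A B = mat 1"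
proof (rule cf_ext)
  fix n
  let ?M = "mat 1 - zmat A ** Fser LX \<phi> A B - zmat B ** Fser LY \<phi> A B"
  have cM: "cf ?M t = (if t = 0 then mat 1 else - (A ** FM LX \<phi> A B (t - 1) + B ** FM LY \<phi> A B (t - 1)))" for t
    by (simp add: cf_diff cf_one cf_zmul cf_Fser)
  show "cf (?M ** Mom \<phi> A B) n = cf (mat 1) n"
  proof (cases n)
    case 0
    then show ?thesis by (simp add: cf_mult cM cf_Mom momM_0[of \<phi>, OF u1] cf_one)
  next
    case (Suc m)
    have "cf (?M ** Mom \<phi> A B) n = momM \<phi> A B (Suc m)
       + (\<Sum>t\<in>{0..m}. - ((A ** FM LX \<phi> A B t + B ** FM LY \<phi> A B t) ** momM \<phi> A B (m - t)))"
      unfolding cf_mult Suc by (subst sum.atLeast0_atMost_Suc_shift) (simp add: cM cf_Mom neg_mm neg_mm2)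
    also have "\<dots> = 0" by (simp add: momM_rec[of \<phi> \<psi>, OF cf u1 u2] sum_negf)
    finally show ?thesis using Suc by (simp add: cf_one)
  qed
qed

function Lc :: "complex fps^'n^'n \<Rightarrow> nat \<Rightarrow> complex^'n^'n::finite" where
  "Lc M n = (if n = 0 then mat 1 else - (\<Sum>k\<in>{..<n}. Lc M k ** cf M (n - k)))"
  by pat_completeness auto
termination by (relation "Wellfounded.measure (\<lambda>(M, n). n)") auto

declare Lc.simps[simp del]

definition Lf :: "complex fps^'n^'n \<Rightarrow> complex fps^'n^'n::finite" where
  "Lf M = (\<chi> i j. Abs_fps (\<lambda>n. Lc M n $ i $ j))"

lemma cf_Lf: "cf (Lf M) n = Lc M n"
  by (simp add: cf_def Lf_def vec_eq_iff)

lemma left_inv: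
  assumes "cf M 0 = mat 1"
  shows "Lf M ** M = mat 1"
proof (rule cf_ext)
  fix n
  show "cf (Lf M ** M) n = cf (mat 1) n"
  proof (cases n)
    case 0
    then show ?thesis using assms by (simp add: cf_mult cf_Lf cf_one Lc.simps)
  next
    case (Suc m)
    have "cf (Lf M ** M) n = (\<Sum>t\<in>{..<Suc m}. Lc M t ** cf M (Suc m - t)) + Lc M (Suc m) ** cf M 0"
      unfolding cf_mult Suc by (subst sum.atLeast0_atMost_Suc) (simp add: cf_Lf atLeast0AtMost lessThan_Suc_atMost)
    also have "\<dots> = 0" using assms by (subst (2) Lc.simps) simp
    finally show ?thesis using Suc by (simp add: cf_one)
  qed
qed

lemma ncfin_sum: "(\<And>k. k \<in> K \<Longrightarrow> ncfin (f k)) \<Longrightarrow> ncfin (\<lambda>w. \<Sum>k\<in>K. f k w)"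
proof (induction K rule: infinite_finite_induct)
  case (infinite K) then show ?case by simp
next
  case empty then show ?case by simp
next
  case (insert x F) then show ?case by (simp add: ncfin_add)
qed

lemma lin_sum: "(\<And>k. k \<in> K \<Longrightarrow> ncfin (f k)) \<Longrightarrow> lin \<theta> (\<lambda>w. \<Sum>k\<in>K. f k w) = (\<Sum>k\<in>K. lin \<theta> (f k))"
proof (induction K rule: infinite_finite_induct)
  case (infinite K) then show ?case by simp
next
  case empty then show ?case by simp
next
  case (insert x F)
  have "lin \<theta> (\<lambda>w. \<Sum>k\<in>insert x F. f k w) = lin \<theta> (\<lambda>w. f x w + (\<Sum>k\<in>F. f k w))"
    using insert by simp
  also have "\<dots> = lin \<theta> (f x) + lin \<theta> (\<lambda>w. \<Sum>k\<in>F. f k w)"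
    using insert by (intro lin_add ncfin_sum) auto
  finally show ?case using insert by simp
qed

lemma ncfin_smult': "ncfin p \<Longrightarrow> ncfin (\<lambda>w. a * p w * b)"
  unfolding ncfin_def by (rule finite_subset[of _ "{w. p w \<noteq> 0}"]) auto

theorem theorem4:
  fixes \<phi> \<psi> :: "word \<Rightarrow> complex"
    and A B :: "complex^'n^'n"
  assumes unital_phi: "\<phi> [] = 1"
    and unital_psi: "\<psi> [] = 1"
    and cf: "cfree \<phi> \<psi>"
  shows "invertible (mat 1 - zmat A ** Fser LX \<phi> A B - zmat B ** Fser LY \<phi> A B)
       \<and> Mom \<phi> A B = matrix_inv (mat 1 - zmat A ** Fser LX \<phi> A B - zmat B ** Fser LY \<phi> A B)
       \<and> (\<forall>(P :: ncp) (m :: nat) (u :: complex^'n) (v :: complex^'n).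
           ncfin P \<longrightarrow> ncdeg P = m \<longrightarrow> m \<ge> 1 \<longrightarrow>
           (\<forall>n. (\<lambda>w. \<Sum>i\<in>UNIV. \<Sum>j\<in>UNIV. u$i * Psi A B n i j w * v$j)
                 = (if m dvd n then ncpow P (n div m) else (\<lambda>w. 0))) \<longrightarrow>
           Abs_fps (\<lambda>k. if m dvd k then lin \<phi> (ncpow P (k div m)) else 0)
             = (\<Sum>i\<in>UNIV. \<Sum>j\<in>UNIV. fps_const (u$i) * Mom \<phi> A B $ i $ j * fps_const (v$j)))"
proof -
  let ?M = "mat 1 - zmat A ** Fser LX \<phi> A B - zmat B ** Fser LY \<phi> A B"
  have R: "?M ** Mom \<phi> A B = mat 1" by (rule right_inv[OF cf unital_phi unital_psi])
  have c0: "cf ?M 0 = mat 1" by (simp add: cf_diff cf_one cf_zmul)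
  have L: "Lf ?M ** ?M = mat 1" by (rule left_inv[OF c0])
  have LM: "Mom \<phi> A B ** ?M = mat 1"
  proof -
    have "Lf ?M = Lf ?M ** (?M ** Mom \<phi> A B)" using R by simp
    also have "\<dots> = Mom \<phi> A B" using L by (simp add: matrix_mul_assoc)
    finally have "Lf ?M = Mom \<phi> A B" .
    then show ?thesis using L by simp
  qed
  have inv: "invertible ?M" unfolding invertible_def using R LM by blast
  have mi: "Mom \<phi> A B = matrix_inv ?M"
    unfolding matrix_inv_def
  proof (rule some_equality[symmetric])
    show "?M ** Mom \<phi> A B = mat 1 \<and> Mom \<phi> A B ** ?M = mat 1" using R LM by simp
    fix A' assume h: "?M ** A' = mat 1 \<and> A' ** ?M = mat 1"
    have "A' = (Mom \<phi> A B ** ?M) ** A'" using LM by simp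
    also have "\<dots> = Mom \<phi> A B" using h by (simp add: matrix_mul_assoc[symmetric])
    finally show "A' = Mom \<phi> A B" .
  qed
  have PP: "\<forall>(P :: ncp) (m :: nat) (u :: complex^'n) (v :: complex^'n).
           ncfin P \<longrightarrow> ncdeg P = m \<longrightarrow> m \<ge> 1 \<longrightarrow>
           (\<forall>n. (\<lambda>w. \<Sum>i\<in>UNIV. \<Sum>j\<in>UNIV. u$i * Psi A B n i j w * v$j)
                 = (if m dvd n then ncpow P (n div m) else (\<lambda>w. 0))) \<longrightarrow>
           Abs_fps (\<lambda>k. if m dvd k then lin \<phi> (ncpow P (k div m)) else 0)
             = (\<Sum>i\<in>UNIV. \<Sum>j\<in>UNIV. fps_const (u$i) * Mom \<phi> A B $ i $ j * fps_const (v$j))"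
  proof (intro allI impI)
    fix P :: ncp and m :: nat and u v :: "complex^'n"
    assume H: "\<forall>n. (\<lambda>w. \<Sum>i\<in>UNIV. \<Sum>j\<in>UNIV. u$i * Psi A B n i j w * v$j)
                 = (if m dvd n then ncpow P (n div m) else (\<lambda>w. 0))"
    show "Abs_fps (\<lambda>k. if m dvd k then lin \<phi> (ncpow P (k div m)) else 0)
             = (\<Sum>i\<in>UNIV. \<Sum>j\<in>UNIV. fps_const (u$i) * Mom \<phi> A B $ i $ j * fps_const (v$j))"
    proof (rule fps_ext)
      fix k
      have e1: "(\<lambda>w. \<Sum>i\<in>UNIV. \<Sum>j\<in>UNIV. u$i * Psi A B k i j w * v$j)
                 = (if m dvd k then ncpow P (k div m) else (\<lambda>w. 0))" using H by blast
      have lhs: "fps_nth (Abs_fps (\<lambda>k. if m dvd k then lin \<phi> (ncpow P (k div m)) else 0)) k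
          = lin \<phi> (\<lambda>w. \<Sum>i\<in>UNIV. \<Sum>j\<in>UNIV. u$i * Psi A B k i j w * v$j)"
        unfolding e1 by simp
      have "lin \<phi> (\<lambda>w. \<Sum>i\<in>UNIV. \<Sum>j\<in>UNIV. u$i * Psi A B k i j w * v$j)
          = (\<Sum>i\<in>UNIV. lin \<phi> (\<lambda>w. \<Sum>j\<in>UNIV. u$i * Psi A B k i j w * v$j))"
        by (rule lin_sum) (auto intro!: ncfin_sum ncfin_smult' ncfin_Psi)
      also have "\<dots> = (\<Sum>i\<in>UNIV. \<Sum>j\<in>UNIV. lin \<phi> (\<lambda>w. u$i * Psi A B k i j w * v$j))"
        by (rule sum.cong[OF refl], rule lin_sum) (auto intro!: ncfin_smult' ncfin_Psi)
      also have "\<dots> = (\<Sum>i\<in>UNIV. \<Sum>j\<in>UNIV. u$i * lin \<phi> (Psi A B k i j) * v$j)"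
      proof (intro sum.cong refl)
        fix i j
        have "(\<lambda>w. u$i * Psi A B k i j w * v$j) = (\<lambda>w. (u$i * v$j) * Psi A B k i j w)"
          by (simp add: algebra_simps)
        then show "lin \<phi> (\<lambda>w. u$i * Psi A B k i j w * v$j) = u$i * lin \<phi> (Psi A B k i j) * v$j"
          using lin_smult[OF ncfin_Psi, of \<phi> "u$i * v$j" A B k i j] by simp
      qed
      also have "\<dots> = fps_nth (\<Sum>i\<in>UNIV. \<Sum>j\<in>UNIV. fps_const (u$i) * Mom \<phi> A B $ i $ j * fps_const (v$j)) k"
        by (simp add: fps_sum_nth Mom_def)
      finally show "fps_nth (Abs_fps (\<lambda>k. if m dvd k then lin \<phi> (ncpow P (k div m)) else 0)) k
          = fps_nth (\<Sum>i\<in>UNIV. \<Sum>j\<in>UNIV. fps_const (u$i) * Mom \<phi> A B $ i $ j * fps_const (v$j)) k"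
        using lhs by simp
    qed
  qed
  show ?thesis using inv mi PP by blast
qed

end
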